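(* Let $m\ge 2$, fix $i_1,\dots,i_m\in\{1,\dots,n\}$, and let $a,r,s,t\ge0$ be integers with $2a+r+(s+2)+t=m$. Then $$[\eta^ax^r\gamma^{s+2}\partial^t;i_1,\dots,i_m]=2(a+1)\,[\eta^{a+1}x^r\gamma^s\partial^t;i_1,\dots,i_m].$$
   Context: Fix $n\ge1$ and an invertible complex matrix $\eta=(\eta^{ij})$ with $\eta^{ij}=\eta^{ji}$. $W(2n|n)$ is the associative superalgebra generated by even $x^1,\dots,x^n,\partial_1,\dots,\partial_n$ and odd $\gamma^1,\dots,\gamma^n$ with relations $x^ix^j=x^jx^i$, $\partial_i\partial_j=\partial_j\partial_i$, $\partial_ix^j-x^j\partial_i=\delta_i^j$, $\gamma^i$ commuting with all $x^j,\partial_j$, $\gamma^i\gamma^j+\gamma^j\gamma^i=2\eta^{ij}$; $\partial^i:=\eta^{ij}\partial_j$ (summed). Bracket symbol: for integers $a,r,s,t\ge0$ with $2a+r+s+t=m$ and indices $i_1,\dots,i_m$, for $\sigma\in S_m$ put $T_\sigma:=\prod_{k=0}^{a-1}\eta^{i_{\sigma(2k+1)}i_{\sigma(2k+2)}}\cdot x^{i_{\sigma(2a+1)}}\cdots x^{i_{\sigma(2a+r)}}\cdot\gamma^{i_{\sigma(2a+r+1)}}\cdots\gamma^{i_{\sigma(2a+r+s)}}\cdot\partial^{i_{\sigma(2a+r+s+1)}}\cdots\partial^{i_{\sigma(m)}}$, and $[\eta^ax^r\gamma^s\partial^t;i_1,\dots,i_m]:=\frac{1}{2^a\,a!\,r!\,t!}\sum_{\sigma\in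 S_m}T_\sigma$; equivalently, the sum of $T_\sigma$ over one representative of each orbit of orderings under swapping the two indices within an $\eta$-pair, permuting the $\eta$-pairs, permuting the $x$-positions and permuting the $\partial$-positions. Factors with exponent $0$ are omitted, and the symbol is defined to be $0$ if the exponent of $x$ is negative. *)

theory Defs
  imports Complex_Main "HOL-Combinatorics.Permutations"
begin

text \<open>A complex associative algebra is modelled as a ring 'a together with a central
  ring homomorphism phi from the complex numbers (the structure map).  The elements
  x i, d i (= partial_i), g i (= gamma^i), i in 1..n, are required to satisfy the
  defining relations of W(2n|n).\<close>

definition WC_rels ::
  "nat \<Rightarrow> (nat \<Rightarrow> nat \<Rightarrow> complex) \<Rightarrow> (complex \<Rightarrow> 'a::ring_1)
   \<Rightarrow> (nat \<Rightarrow> 'a) \<Rightarrow> (nat \<Rightarrow> 'a) \<Rightarrow> (nat \<Rightarrow> 'a) \<Rightarrow> bool" where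
  "WC_rels n eta phi x d g \<longleftrightarrow>
     phi 1 = 1 \<and>
     (\<forall>u v. phi (u + v) = phi u + phi v) \<and>
     (\<forall>u v. phi (u * v) = phi u * phi v) \<and>
     (\<forall>u y. phi u * y = y * phi u) \<and>
     (\<forall>i\<in>{1..n}. \<forall>j\<in>{1..n}.
        x i * x j = x j * x i \<and>
        d i * d j = d j * d i \<and>
        d i * x j - x j * d i = (if i = j then 1 else 0) \<and>
        g i * x j = x j * g i \<and>
        g i * d j = d j * g i \<and>
        g i * g j + g j * g i = 2 * phi (eta i j))"

text \<open>raised derivative partial^i = sum_j eta^{ij} partial_j\<close>
definition dup ::
  "nat \<Rightarrow> (nat \<Rightarrow> nat \<Rightarrow> complex) \<Rightarrow> (complex \<Rightarrow> 'a::ring_1) \<Rightarrow> (nat \<Rightarrow> 'a) \<Rightarrow> nat \<Rightarrow> 'a" where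
  "dup n eta phi d i = (\<Sum>j=1..n. phi (eta i j) * d j)"

definition Tterm ::
  "nat \<Rightarrow> (nat \<Rightarrow> nat \<Rightarrow> complex) \<Rightarrow> (complex \<Rightarrow> 'a::ring_1)
   \<Rightarrow> (nat \<Rightarrow> 'a) \<Rightarrow> (nat \<Rightarrow> 'a) \<Rightarrow> (nat \<Rightarrow> 'a)
   \<Rightarrow> nat \<Rightarrow> nat \<Rightarrow> nat \<Rightarrow> nat \<Rightarrow> nat \<Rightarrow> (nat \<Rightarrow> nat) \<Rightarrow> (nat \<Rightarrow> nat) \<Rightarrow> 'a" where
  "Tterm n eta phi x d g a r s t m idx \<sigma> =
     phi (\<Prod>k<a. eta (idx (\<sigma> (2*k+1))) (idx (\<sigma> (2*k+2)))) *
     prod_list (map (\<lambda>p. x (idx (\<sigma> p))) [2*a+1..<2*a+r+1]) *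
     prod_list (map (\<lambda>p. g (idx (\<sigma> p))) [2*a+r+1..<2*a+r+s+1]) *
     prod_list (map (\<lambda>p. dup n eta phi d (idx (\<sigma> p))) [2*a+r+s+1..<m+1])"

definition bracket ::
  "nat \<Rightarrow> (nat \<Rightarrow> nat \<Rightarrow> complex) \<Rightarrow> (complex \<Rightarrow> 'a::ring_1)
   \<Rightarrow> (nat \<Rightarrow> 'a) \<Rightarrow> (nat \<Rightarrow> 'a) \<Rightarrow> (nat \<Rightarrow> 'a)
   \<Rightarrow> nat \<Rightarrow> nat \<Rightarrow> nat \<Rightarrow> nat \<Rightarrow> nat \<Rightarrow> (nat \<Rightarrow> nat) \<Rightarrow> 'a" where
  "bracket n eta phi x d g a r s t m idx =
     phi (1 / (2 ^ a * fact a * fact r * fact t)) *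
     (\<Sum>\<sigma>\<in>{\<sigma>. \<sigma> permutes {1..m}}. Tterm n eta phi x d g a r s t m idx \<sigma>)"

end

theory Submission
  imports Defs
begin

lemma phi_facts:
  assumes "WC_rels n eta phi x d g"
  shows "phi 0 = 0" "\<And>u v. phi (u*v) = phi u * phi v" "\<And>u y. phi u * y = y * phi u"
    "\<And>k. phi (of_nat k) = of_nat k" "\<And>u v. phi (u+v) = phi u + phi v"
proof -
  have add: "\<And>u v. phi (u + v) = phi u + phi v" using assms unfolding WC_rels_def by blast
  show "\<And>u v. phi (u+v) = phi u + phi v" by (rule add)
  show z: "phi 0 = 0" using add[of 0 0] by simp
  show "\<And>u v. phi (u*v) = phi u * phi v" "\<And>u y. phi u * y = y * phi u"
    using assms unfolding WC_rels_def by blast+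
  have one: "phi 1 = 1" using assms unfolding WC_rels_def by blast
  show "phi (of_nat k) = of_nat k" for k
    by (induction k) (simp_all add: z add one)
qed

definition PRt :: "(nat \<Rightarrow> nat \<Rightarrow> complex) \<Rightarrow> nat \<Rightarrow> (nat \<Rightarrow> nat) \<Rightarrow> (nat \<Rightarrow> nat) \<Rightarrow> complex" where
  "PRt eta a idx \<sigma> = (\<Prod>k<a. eta (idx (\<sigma> (2*k+1))) (idx (\<sigma> (2*k+2))))"

definition Lt :: "(nat \<Rightarrow> 'a::ring_1) \<Rightarrow> nat \<Rightarrow> nat \<Rightarrow> (nat \<Rightarrow> nat) \<Rightarrow> (nat \<Rightarrow> nat) \<Rightarrow> 'a" where
  "Lt f lo hi idx \<sigma> = prod_list (map (\<lambda>p. f (idx (\<sigma> p))) [lo..<hi])"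

lemma Tterm_Lt:
  "Tterm n eta phi x d g a r s t m idx \<sigma> =
     phi (PRt eta a idx \<sigma>) * Lt x (2*a+1) (2*a+r+1) idx \<sigma> * Lt g (2*a+r+1) (2*a+r+s+1) idx \<sigma>
     * Lt (dup n eta phi d) (2*a+r+s+1) (m+1) idx \<sigma>"
  unfolding Tterm_def PRt_def Lt_def by simp

lemma Lt_cong: "(\<And>p. lo \<le> p \<Longrightarrow> p < hi \<Longrightarrow> \<sigma>' p = \<sigma> p) \<Longrightarrow> Lt f lo hi idx \<sigma>' = Lt f lo hi idx \<sigma>"
  unfolding Lt_def by (intro arg_cong[where f=prod_list] map_cong) auto

lemma PRt_cong: "(\<And>p. 1 \<le> p \<Longrightarrow> p \<le> 2*a \<Longrightarrow> \<sigma>' p = \<sigma> p) \<Longrightarrow> PRt eta a idx \<sigma>' = PRt eta a idx \<sigma>"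
  unfolding PRt_def by (intro prod.cong) auto

lemma Lt_cons: "lo < hi \<Longrightarrow> Lt f lo hi idx \<sigma> = f (idx (\<sigma> lo)) * Lt f (Suc lo) hi idx \<sigma>"
  unfolding Lt_def by (simp add: upt_conv_Cons)

lemma Lt_shift2: "(\<And>p. lo \<le> p \<Longrightarrow> p < hi \<Longrightarrow> \<sigma>' (p+2) = \<sigma> p) \<Longrightarrow>
    Lt f (lo+2) (hi+2) idx \<sigma>' = Lt f lo hi idx \<sigma>"
proof (induction hi)
  case 0
  then show ?case by (simp add: Lt_def)
next
  case (Suc hi)
  show ?case
  proof (cases "lo \<le> hi")
    case True
    have "Lt f (lo+2) (Suc hi+2) idx \<sigma>' = Lt f (lo+2) (hi+2) idx \<sigma>' * f (idx (\<sigma>' (hi+2)))"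
      using True by (simp add: Lt_def)
    also have "\<dots> = Lt f lo hi idx \<sigma> * f (idx (\<sigma> hi))"
      using Suc True by simp
    also have "\<dots> = Lt f lo (Suc hi) idx \<sigma>" using True by (simp add: Lt_def)
    finally show ?thesis .
  next
    case False
    then show ?thesis by (simp add: Lt_def)
  qed
qed


lemma pair_sum:
  fixes f h :: "'b \<Rightarrow> 'c::comm_monoid_add"
  assumes "finite S" "A \<subseteq> S" "inj_on k A" "k ` A = S - A"
    and "\<And>y. y \<in> A \<Longrightarrow> f y + f (k y) = h y + h (k y)"
  shows "sum f S = sum h S"
proof -
  have e: "sum u S = sum (\<lambda>y. u y + u (k y)) A" for u :: "'b \<Rightarrow> 'c"
  proof -
    have "sum u S = sum u A + sum u (S - A)"
      using assms(1,2) by (metis add.commute sum.subset_diff)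
    also have "sum u (S - A) = sum (u \<circ> k) A"
      using sum.reindex[OF assms(3), of u] assms(4) by simp
    finally show ?thesis by (simp add: sum.distrib)
  qed
  show ?thesis unfolding e[of f] e[of h] using assms(5) by (simp cong: sum.cong)
qed

definition piperm :: "nat \<Rightarrow> nat \<Rightarrow> nat \<Rightarrow> nat" where
  "piperm a r p = (if p = 2*a+1 then 2*a+r+1 else if p = 2*a+2 then 2*a+r+2
      else if 2*a+2 < p \<and> p \<le> 2*a+r+2 then p-2 else p)"

lemma piperm_permutes:
  assumes "2*a+r+2 \<le> m"
  shows "piperm a r permutes {1..m}"
proof (rule bij_imp_permutes)
  define q where "q = (\<lambda>y::nat. if y = 2*a+r+1 then 2*a+1 else if y = 2*a+r+2 then 2*a+2
      else if 2*a+1 \<le> y \<and> y < 2*a+r+1 then y+2 else y)"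
  show "bij_betw (piperm a r) {1..m} {1..m}"
    by (rule bij_betw_byWitness[where f'=q]) (use assms in \<open>auto simp: q_def piperm_def\<close>)
  show "\<And>y. y \<notin> {1..m} \<Longrightarrow> piperm a r y = y" using assms by (auto simp: piperm_def)
qed


theorem lemma5p1:
  fixes n m a r s t :: nat
    and eta :: "nat \<Rightarrow> nat \<Rightarrow> complex"
    and phi :: "complex \<Rightarrow> 'a::ring_1"
    and x d g :: "nat \<Rightarrow> 'a"
    and idx :: "nat \<Rightarrow> nat"
  assumes "n \<ge> 1"
    and "\<forall>i\<in>{1..n}. \<forall>j\<in>{1..n}. eta i j = eta j i"
    and "\<exists>zeta. \<forall>i\<in>{1..n}. \<forall>j\<in>{1..n}.
           (\<Sum>k=1..n. eta i k * zeta k j) = (if i = j then 1 else 0)"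
    and "WC_rels n eta phi x d g"
    and "m \<ge> 2"
    and "\<forall>k\<in>{1..m}. idx k \<in> {1..n}"
    and "2*a + r + (s+2) + t = m"
  shows "bracket n eta phi x d g a r (s+2) t m idx
         = of_nat (2*(a+1)) * bracket n eta phi x d g (a+1) r s t m idx"
proof -
  note ph = phi_facts[OF assms(4)]
  define p0 where "p0 = 2*a+r+1"
  define S where "S = {\<sigma>. \<sigma> permutes {1..m}}"
  define dd where "dd = dup n eta phi d"
  define Fv where "Fv = (\<lambda>\<sigma>. phi (PRt eta a idx \<sigma>) * Lt x (2*a+1) (2*a+r+1) idx \<sigma>
     * phi (eta (idx (\<sigma> p0)) (idx (\<sigma> (Suc p0)))) * Lt g (2*a+r+3) (2*a+r+s+3) idx \<sigma>
     * Lt dd (2*a+r+s+3) (m+1) idx \<sigma>)"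
  define Tl where "Tl = Tterm n eta phi x d g a r (s+2) t m idx"
  define Tr where "Tr = Tterm n eta phi x d g (a+1) r s t m idx"
  have m: "2*a+r+s+2+t = m" using assms(7) by simp
  have Tl_eq: "Tl \<sigma> = phi (PRt eta a idx \<sigma>) * Lt x (2*a+1) (2*a+r+1) idx \<sigma>
     * (g (idx (\<sigma> p0)) * (g (idx (\<sigma> (Suc p0))) * Lt g (2*a+r+3) (2*a+r+s+3) idx \<sigma>))
     * Lt dd (2*a+r+s+3) (m+1) idx \<sigma>" for \<sigma>
  proof -
    have "Lt g (2*a+r+1) (2*a+r+(s+2)+1) idx \<sigma> =
       g (idx (\<sigma> p0)) * (g (idx (\<sigma> (Suc p0))) * Lt g (2*a+r+3) (2*a+r+s+3) idx \<sigma>)"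
      unfolding p0_def by (simp add: Lt_cons numeral_eq_Suc)
    then show ?thesis unfolding Tl_def Tterm_Lt dd_def by (simp add: numeral_eq_Suc)
  qed
  have pi: "piperm a r permutes {1..m}" using m by (intro piperm_permutes) simp
  have Tr_eq: "Tr (\<sigma> \<circ> piperm a r) = Fv \<sigma>" for \<sigma>
  proof -
    let ?\<rho> = "\<sigma> \<circ> piperm a r"
    have "PRt eta (Suc a) idx ?\<rho> = PRt eta a idx ?\<rho> * eta (idx (?\<rho> (2*a+1))) (idx (?\<rho> (2*a+2)))"
      unfolding PRt_def by simp
    also have "PRt eta a idx ?\<rho> = PRt eta a idx \<sigma>"
      by (rule PRt_cong) (simp add: piperm_def)
    finally have 1: "PRt eta (a+1) idx ?\<rho> = PRt eta a idx \<sigma> * eta (idx (\<sigma> p0)) (idx (\<sigma> (Suc p0)))"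
      by (simp add: piperm_def p0_def o_def)
    have 2: "Lt x (2*a+1+2) (2*a+r+1+2) idx ?\<rho> = Lt x (2*a+1) (2*a+r+1) idx \<sigma>"
      by (rule Lt_shift2) (auto simp: piperm_def)
    have 3: "Lt g (2*a+r+3) (2*a+r+s+3) idx ?\<rho> = Lt g (2*a+r+3) (2*a+r+s+3) idx \<sigma>"
      by (rule Lt_cong) (auto simp: piperm_def)
    have 4: "Lt dd (2*a+r+s+3) (m+1) idx ?\<rho> = Lt dd (2*a+r+s+3) (m+1) idx \<sigma>"
      by (rule Lt_cong) (auto simp: piperm_def)
    have e1: "2*(a+1)+1 = 2*a+1+2" "2*(a+1)+r+1 = 2*a+r+1+2" "2*(a+1)+r+s+1 = 2*a+r+s+3"
      by simp_all
    have e2: "2*a+r+1+2 = 2*a+r+3" by simp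
    have 2: "Lt x (2*(a+1)+1) (2*(a+1)+r+1) idx ?\<rho> = Lt x (2*a+1) (2*a+r+1) idx \<sigma>"
      unfolding e1 using 2 .
    have 3: "Lt g (2*(a+1)+r+1) (2*(a+1)+r+s+1) idx ?\<rho> = Lt g (2*a+r+3) (2*a+r+s+3) idx \<sigma>"
      unfolding e1 e2 using 3 .
    have 4: "Lt dd (2*(a+1)+r+s+1) (m+1) idx ?\<rho> = Lt dd (2*a+r+s+3) (m+1) idx \<sigma>"
      unfolding e1 using 4 .
    define P where "P = PRt eta a idx \<sigma>"
    define E where "E = eta (idx (\<sigma> p0)) (idx (\<sigma> (Suc p0)))"
    define X' where "X' = Lt x (2*a+1) (2*a+r+1) idx \<sigma>"
    define G' where "G' = Lt g (2*a+r+3) (2*a+r+s+3) idx \<sigma>"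
    define D' where "D' = Lt dd (2*a+r+s+3) (m+1) idx \<sigma>"
    have "Tr ?\<rho> = phi (P * E) * X' * G' * D'"
      unfolding Tr_def Tterm_Lt dd_def[symmetric] 1 2 3 4 P_def E_def X'_def G'_def D'_def ..
    also have "\<dots> = phi P * X' * phi E * G' * D'"
    proof -
      have h: "phi P * phi E * X' = phi P * X' * phi E" by (simp add: mult.assoc ph(3)[of E X'])
      show ?thesis unfolding ph(2) by (simp only: h)
    qed
    also have "\<dots> = Fv \<sigma>" unfolding Fv_def P_def E_def X'_def G'_def D'_def ..
    finally show ?thesis .
  qed
  have sumR: "sum Tr S = sum Fv S"
    unfolding S_def using sum_permutations_compose_right[OF pi, of Tr] Tr_eq by simp
  have sumL: "sum Tl S = sum Fv S"
  proof (rule pair_sum)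
    define \<tau> where "\<tau> = Transposition.transpose p0 (Suc p0)"
    have p0m: "p0 \<in> {1..m}" "Suc p0 \<in> {1..m}" using m by (auto simp: p0_def)
    have tp: "\<tau> permutes {1..m}" unfolding \<tau>_def using p0m by (rule permutes_swap_id)
    have tt: "\<sigma> \<circ> \<tau> \<circ> \<tau> = \<sigma>" for \<sigma> :: "nat \<Rightarrow> nat"
      by (rule ext) (simp add: \<tau>_def Transposition.transpose_def)
    have t0: "\<tau> p0 = Suc p0" "\<tau> (Suc p0) = p0" by (simp_all add: \<tau>_def)
    have t1: "\<tau> p = p" if "p \<noteq> p0" "p \<noteq> Suc p0" for p
      using that by (simp add: \<tau>_def Transposition.transpose_def)
    define A where "A = {\<sigma>\<in>S. \<sigma> p0 < \<sigma> (Suc p0)}"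
    show "finite S" unfolding S_def by (simp add: finite_permutations)
    show "A \<subseteq> S" unfolding A_def by blast
    show "inj_on (\<lambda>\<sigma>. \<sigma> \<circ> \<tau>) A"
      by (rule inj_onI) (metis tt)
    show "(\<lambda>\<sigma>. \<sigma> \<circ> \<tau>) ` A = S - A"
    proof
      show "(\<lambda>\<sigma>. \<sigma> \<circ> \<tau>) ` A \<subseteq> S - A"
        using tp permutes_compose unfolding A_def S_def by (auto simp: t0)
      show "S - A \<subseteq> (\<lambda>\<sigma>. \<sigma> \<circ> \<tau>) ` A"
      proof
        fix \<sigma> assume \<sigma>: "\<sigma> \<in> S - A"
        then have ps: "\<sigma> permutes {1..m}" unfolding S_def by simp
        have "\<sigma> p0 \<noteq> \<sigma> (Suc p0)" using permutes_inj[OF ps] by (metis inj_eq n_not_Suc_n)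
        then have "\<sigma> \<circ> \<tau> \<in> A" using \<sigma> tp permutes_compose[OF tp ps]
          unfolding A_def S_def by (auto simp: t0)
        moreover have "\<sigma> = (\<sigma> \<circ> \<tau>) \<circ> \<tau>" using tt by simp
        ultimately show "\<sigma> \<in> (\<lambda>\<sigma>. \<sigma> \<circ> \<tau>) ` A" by blast
      qed
    qed
    fix \<sigma> assume "\<sigma> \<in> A"
    then have ps: "\<sigma> permutes {1..m}" unfolding A_def S_def by simp
    define u where "u = idx (\<sigma> p0)"
    define v where "v = idx (\<sigma> (Suc p0))"
    have un: "u \<in> {1..n}" "v \<in> {1..n}" unfolding u_def v_def
      using assms(6) permutes_in_image[OF ps] p0m by auto
    have rel: "g u * g v + g v * g u = 2 * phi (eta u v)"
      using assms(4) un unfolding WC_rels_def by blast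
    have sym: "eta v u = eta u v" using assms(2) un by auto
    define P where "P = phi (PRt eta a idx \<sigma>)"
    define X' where "X' = Lt x (2*a+1) (2*a+r+1) idx \<sigma>"
    define G' where "G' = Lt g (2*a+r+3) (2*a+r+s+3) idx \<sigma>"
    define D' where "D' = Lt dd (2*a+r+s+3) (m+1) idx \<sigma>"
    have same: "\<And>p. p \<noteq> p0 \<Longrightarrow> p \<noteq> Suc p0 \<Longrightarrow> (\<sigma> \<circ> \<tau>) p = \<sigma> p" using t1 by simp
    have cP: "phi (PRt eta a idx (\<sigma> \<circ> \<tau>)) = P" unfolding P_def
      by (rule arg_cong[where f=phi], rule PRt_cong) (auto simp: t1 p0_def)
    have cX: "Lt x (2*a+1) (2*a+r+1) idx (\<sigma> \<circ> \<tau>) = X'" unfolding X'_def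
      by (rule Lt_cong) (auto simp: t1 p0_def)
    have cG: "Lt g (2*a+r+3) (2*a+r+s+3) idx (\<sigma> \<circ> \<tau>) = G'" unfolding G'_def
      by (rule Lt_cong) (auto simp: t1 p0_def)
    have cD: "Lt dd (2*a+r+s+3) (m+1) idx (\<sigma> \<circ> \<tau>) = D'" unfolding D'_def
      by (rule Lt_cong) (auto simp: t1 p0_def)
    have cu: "idx ((\<sigma> \<circ> \<tau>) p0) = v" "idx ((\<sigma> \<circ> \<tau>) (Suc p0)) = u"
      unfolding u_def v_def by (simp_all add: t0)
    have L: "Tl \<sigma> + Tl (\<sigma> \<circ> \<tau>) = P * X' * ((g u * g v + g v * g u) * G') * D'"
      unfolding Tl_eq cP cX cG cD cu
      by (simp add: P_def X'_def G'_def D'_def u_def v_def distrib_left distrib_right mult.assoc)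
    have R: "Fv \<sigma> + Fv (\<sigma> \<circ> \<tau>) = P * X' * ((phi (eta u v) + phi (eta u v)) * G') * D'"
      unfolding Fv_def cX cG cD cu sym
      by (simp add: cP[unfolded P_def] P_def X'_def G'_def D'_def u_def v_def distrib_left distrib_right mult.assoc)
    show "Tl \<sigma> + Tl (\<sigma> \<circ> \<tau>) = Fv \<sigma> + Fv (\<sigma> \<circ> \<tau>)"
      unfolding L R rel mult_2 ..
  qed
  have c: "of_nat (2*(a+1)) * phi (1 / (2 ^ (a+1) * fact (a+1) * fact r * fact t))
     = phi (1 / (2 ^ a * fact a * fact r * fact t))"
  proof -
    have "(of_nat (2*(a+1)) :: complex) * (1 / (2 ^ (a+1) * fact (a+1) * fact r * fact t))
       = 1 / (2 ^ a * fact a * fact r * fact t)"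
    proof -
      have nz: "(2 ^ a * fact a * fact r * fact t :: complex) \<noteq> 0" by simp
      have nz2: "(of_nat (2*(a+1)) :: complex) \<noteq> 0" by (simp only: of_nat_eq_0_iff) simp
      have f: "(2 ^ (a+1) * fact (a+1) * fact r * fact t :: complex)
          = of_nat (2*(a+1)) * (2 ^ a * fact a * fact r * fact t)"
        by (simp only: fact_Suc power_Suc Suc_eq_plus1[symmetric] of_nat_mult) (simp add: ac_simps)
      show ?thesis unfolding f using nz nz2 by simp
    qed
    then show ?thesis by (metis ph(2) ph(4))
  qed
  show ?thesis
    unfolding bracket_def using sumL sumR c
    unfolding bracket_def Tl_def[symmetric] Tr_def[symmetric] S_def[symmetric]
    by (simp only: sumL sumR mult.assoc[symmetric] c)
qed

end
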